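(* Let $\lambda$ be a partition with $|\lambda| = k$. Then for all $n \in \mathbb{N}$ (with $\mathbb{N}=\{0,1,2,\dots\}$), \[ \frac{1}{\# \mathcal{OT}(\lambda,k+2n)} \sum_{T \in \mathcal{OT}(\lambda,k+2n)} \mathrm{wt}(T) = \frac{1}{6}\left(4n^2 + 3k^2 + 8 kn + 2n +3k\right).\]
   Context: Young's lattice is the poset of all integer partitions ordered by inclusion of Young diagrams; write $\mu \lessdot \lambda$ if the Young diagram of $\lambda$ is obtained from that of $\mu$ by adding one box. $|\lambda|$ denotes the size (number of boxes) of $\lambda$. A walk in Young's lattice is a sequence of partitions $(\lambda^{0},\lambda^{1},\ldots,\lambda^{l})$ such that for each $1\le i\le l$ either $\lambda^{i-1}\lessdot\lambda^{i}$ or $\lambda^{i}\lessdot\lambda^{i-1}$. An oscillating tableau of shape $\lambda$ and length $l$ is such a walk with $\lambda^{0}=\emptyset$ (the empty partition) and $\lambda^{l}=\lambda$; $\mathcal{OT}(\lambda,l)$ denotes the set of all of them. The weight of $T=(\lambda^{0},\ldots,\lambda^{l})$ is $\mathrm{wt}(T) := \sum_{i=0}^{l}|\lambda^{i}|$. (The set $\mathcal{OT}(\lambda,k+2n)$ is nonempty for all $n\in\mathbb{N}$.) *)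

theory Defs
  imports Main Complex_Main
begin

definition is_partition :: "nat list \<Rightarrow> bool" where
  "is_partition p \<longleftrightarrow> sorted_wrt (\<ge>) p \<and> (\<forall>x\<in>set p. 0 < x)"

definition psize :: "nat list \<Rightarrow> nat" where
  "psize p = sum_list p"

definition diagram :: "nat list \<Rightarrow> (nat \<times> nat) set" where
  "diagram p = {(i, j). i < length p \<and> j < p ! i}"

definition covers :: "nat list \<Rightarrow> nat list \<Rightarrow> bool" where
  "covers mu lam \<longleftrightarrow> is_partition mu \<and> is_partition lam \<and>
     diagram mu \<subseteq> diagram lam \<and> card (diagram lam - diagram mu) = 1"

definition OT :: "nat list \<Rightarrow> nat \<Rightarrow> nat list list set" where
  "OT lam l = {T. length T = l + 1 \<and> T ! 0 = [] \<and> T ! l = lam \<and>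
     (\<forall>i. 1 \<le> i \<and> i \<le> l \<longrightarrow> covers (T ! (i - 1)) (T ! i) \<or> covers (T ! i) (T ! (i - 1)))}"

definition wt :: "nat list list \<Rightarrow> nat" where
  "wt T = (\<Sum>i\<le>length T - 1. psize (T ! i))"

end

theory Submission
  imports Defs
begin

definition rowf :: "nat list \<Rightarrow> nat \<Rightarrow> nat" where
  "rowf p i = (if i < length p then p ! i else 0)"

definition prow :: "(nat \<Rightarrow> nat) \<Rightarrow> bool" where
  "prow r \<longleftrightarrow> (\<forall>i. r (Suc i) \<le> r i) \<and> (\<exists>n. r n = 0)"

definition lenr :: "(nat \<Rightarrow> nat) \<Rightarrow> nat" where
  "lenr r = (LEAST n. r n = 0)"

definition fromrow :: "(nat \<Rightarrow> nat) \<Rightarrow> nat list" where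
  "fromrow r = map r [0..<lenr r]"

definition up :: "(nat \<Rightarrow> nat) \<Rightarrow> nat \<Rightarrow> nat \<Rightarrow> nat" where
  "up r i = r(i := Suc (r i))"

definition dn :: "(nat \<Rightarrow> nat) \<Rightarrow> nat \<Rightarrow> nat \<Rightarrow> nat" where
  "dn r j = r(j := r j - 1)"

definition AI :: "(nat \<Rightarrow> nat) \<Rightarrow> nat set" where
  "AI r = {i. i = 0 \<or> r i < r (i - 1)}"

definition RI :: "(nat \<Rightarrow> nat) \<Rightarrow> nat set" where
  "RI r = {j. r (Suc j) < r j}"

definition rs :: "(nat \<Rightarrow> nat) \<Rightarrow> nat" where
  "rs r = (\<Sum>i<lenr r. r i)"

lemma prow_mono: assumes "prow r" "i \<le> j" shows "r j \<le> r i"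
proof -
  have "\<And>n. r (Suc n) \<le> r n" using assms(1) unfolding prow_def by blast
  thus ?thesis using lift_Suc_antimono_le[of r i j] assms(2) by blast
qed

lemma prow_zero_iff: assumes "prow r" shows "r i = 0 \<longleftrightarrow> lenr r \<le> i"
proof
  assume "r i = 0" thus "lenr r \<le> i" unfolding lenr_def by (rule Least_le)
next
  assume "lenr r \<le> i"
  have "\<exists>n. r n = 0" using assms unfolding prow_def by blast
  hence "r (lenr r) = 0" unfolding lenr_def by (rule LeastI_ex)
  thus "r i = 0" using prow_mono[OF assms \<open>lenr r \<le> i\<close>] by simp
qed

lemma prow_pos_iff: "prow r \<Longrightarrow> 0 < r i \<longleftrightarrow> i < lenr r"
  using prow_zero_iff[of r i] by auto

lemma finite_AI: assumes "prow r" shows "AI r \<subseteq> {..lenr r}" "finite (AI r)"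
proof -
  show "AI r \<subseteq> {..lenr r}"
  proof
    fix i assume "i \<in> AI r"
    show "i \<in> {..lenr r}"
    proof (rule ccontr)
      assume "i \<notin> {..lenr r}"
      hence "lenr r \<le> i - 1" "i \<noteq> 0" by auto
      hence "r (i - 1) = 0" using prow_zero_iff[OF assms] by auto
      with \<open>i \<in> AI r\<close> \<open>i \<noteq> 0\<close> show False unfolding AI_def by auto
    qed
  qed
  thus "finite (AI r)" using finite_subset by blast
qed

lemma finite_RI: assumes "prow r" shows "RI r \<subseteq> {..<lenr r}" "finite (RI r)"
proof -
  show "RI r \<subseteq> {..<lenr r}"
  proof
    fix i assume "i \<in> RI r"
    hence "0 < r i" unfolding RI_def by auto
    thus "i \<in> {..<lenr r}" using prow_pos_iff[OF assms] by auto
  qed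
  thus "finite (RI r)" using finite_subset by blast
qed

lemma prow_up: assumes "prow r" "i \<in> AI r" shows "prow (up r i)"
proof -
  have "\<forall>x. up r i (Suc x) \<le> up r i x"
  proof
    fix x
    have m: "r (Suc x) \<le> r x" using assms(1) unfolding prow_def by blast
    show "up r i (Suc x) \<le> up r i x"
    proof (cases "x = i")
      case True thus ?thesis using m unfolding up_def by simp
    next
      case False
      show ?thesis
      proof (cases "Suc x = i")
        case True
        hence "r i < r x" using assms(2) unfolding AI_def by auto
        thus ?thesis using True False unfolding up_def by simp
      next
        case False2: False
        thus ?thesis using m False unfolding up_def by simp
      qed
    qed
  qed
  moreover have "up r i (Suc i + lenr r) = 0"
    using prow_zero_iff[OF assms(1), of "Suc i + lenr r"] unfolding up_def by auto
  ultimately show ?thesis unfolding prow_def by blast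
qed

lemma prow_dn: assumes "prow r" "j \<in> RI r" shows "prow (dn r j)"
proof -
  have "\<forall>x. dn r j (Suc x) \<le> dn r j x"
  proof
    fix x
    have m: "r (Suc x) \<le> r x" using assms(1) unfolding prow_def by blast
    show "dn r j (Suc x) \<le> dn r j x"
    proof (cases "x = j")
      case True
      hence "r (Suc x) < r x" using assms(2) unfolding RI_def by auto
      thus ?thesis using True unfolding dn_def by simp
    next
      case False
      thus ?thesis using m unfolding dn_def by auto
    qed
  qed
  moreover have "dn r j (Suc j + lenr r) = 0"
    using prow_zero_iff[OF assms(1), of "Suc j + lenr r"] unfolding dn_def by auto
  ultimately show ?thesis unfolding prow_def by blast
qed

lemma sum_upd: fixes r :: "nat \<Rightarrow> nat"
  assumes "finite A" "i \<in> A" shows "sum (r(i:=v)) A + r i = sum r A + v"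
proof -
  have "sum (r(i:=v)) A = (r(i:=v)) i + sum (r(i:=v)) (A - {i})" by (rule sum.remove[OF assms])
  moreover have "sum r A = r i + sum r (A - {i})" by (rule sum.remove[OF assms])
  moreover have "sum (r(i:=v)) (A - {i}) = sum r (A - {i})" by (rule sum.cong) auto
  ultimately show ?thesis by simp
qed

lemma part_rowf: assumes "is_partition p" shows "prow (rowf p)"
proof -
  have s: "\<And>i j. i < j \<Longrightarrow> j < length p \<Longrightarrow> p ! j \<le> p ! i"
    using assms unfolding is_partition_def sorted_wrt_iff_nth_less by blast
  have "\<forall>i. rowf p (Suc i) \<le> rowf p i" unfolding rowf_def using s by auto
  moreover have "rowf p (length p) = 0" unfolding rowf_def by simp
  ultimately show ?thesis unfolding prow_def by blast
qed

lemma rowf_zero_iff: assumes "is_partition p" shows "rowf p i = 0 \<longleftrightarrow> length p \<le> i"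
  using assms unfolding rowf_def is_partition_def by (auto simp: in_set_conv_nth)

lemma lenr_rowf: assumes "is_partition p" shows "lenr (rowf p) = length p"
proof -
  have "lenr (rowf p) \<le> i \<longleftrightarrow> length p \<le> i" for i
    using prow_zero_iff[OF part_rowf[OF assms]] rowf_zero_iff[OF assms] by blast
  thus ?thesis by (metis le_antisym order_refl)
qed

lemma fromrow_rowf: assumes "is_partition p" shows "fromrow (rowf p) = p"
  unfolding fromrow_def lenr_rowf[OF assms] by (rule nth_equalityI) (auto simp: rowf_def)

lemma part_fromrow: assumes "prow r" shows "is_partition (fromrow r)"
proof -
  have "sorted_wrt (\<ge>) (fromrow r)" unfolding sorted_wrt_iff_nth_less fromrow_def
    using prow_mono[OF assms] by auto
  moreover have "\<forall>x\<in>set (fromrow r). 0 < x" unfolding fromrow_def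
    using prow_pos_iff[OF assms] by auto
  ultimately show ?thesis unfolding is_partition_def by blast
qed

lemma rowf_fromrow: assumes "prow r" shows "rowf (fromrow r) = r"
proof
  fix i show "rowf (fromrow r) i = r i"
    unfolding rowf_def fromrow_def using prow_zero_iff[OF assms, of i] by auto
qed

lemma psize_fromrow: "psize (fromrow r) = rs r"
  unfolding psize_def fromrow_def rs_def
  by (simp add: sum_set_upt_conv_sum_list_nat[symmetric] atLeast0LessThan)

lemma rs_ext: assumes "prow r" "lenr r \<le> M" shows "rs r = (\<Sum>i<M. r i)"
  unfolding rs_def
proof (rule sum.mono_neutral_left)
  show "\<forall>i\<in>{..<M} - {..<lenr r}. r i = 0" using prow_zero_iff[OF assms(1)] by auto
qed (use assms in auto)

lemma lenr_le: "r M = 0 \<Longrightarrow> lenr r \<le> M"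
  unfolding lenr_def by (rule Least_le)

lemma rs_up: assumes "prow r" "i \<in> AI r" shows "rs (up r i) = Suc (rs r)"
proof -
  define M where "M = Suc i + lenr r"
  have "r M = 0" using prow_zero_iff[OF assms(1)] unfolding M_def by auto
  hence "up r i M = 0" unfolding up_def M_def by auto
  hence "rs (up r i) = (\<Sum>x<M. up r i x)" using rs_ext[OF prow_up[OF assms]] lenr_le by blast
  moreover have "rs r = (\<Sum>x<M. r x)" using rs_ext[OF assms(1)] \<open>r M = 0\<close> lenr_le by blast
  moreover have "(\<Sum>x<M. up r i x) + r i = (\<Sum>x<M. r x) + Suc (r i)"
    unfolding up_def by (rule sum_upd) (auto simp: M_def)
  ultimately show ?thesis by simp
qed

lemma rs_dn: assumes "prow r" "j \<in> RI r" shows "Suc (rs (dn r j)) = rs r"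
proof -
  define M where "M = Suc j + lenr r"
  have "r M = 0" using prow_zero_iff[OF assms(1)] unfolding M_def by auto
  hence "dn r j M = 0" unfolding dn_def M_def by auto
  hence "rs (dn r j) = (\<Sum>x<M. dn r j x)" using rs_ext[OF prow_dn[OF assms]] lenr_le by blast
  moreover have "rs r = (\<Sum>x<M. r x)" using rs_ext[OF assms(1)] \<open>r M = 0\<close> lenr_le by blast
  moreover have "(\<Sum>x<M. dn r j x) + r j = (\<Sum>x<M. r x) + (r j - 1)"
    unfolding dn_def by (rule sum_upd) (auto simp: M_def)
  moreover have "0 < r j" using assms(2) unfolding RI_def by auto
  ultimately show ?thesis by simp
qed

lemma diagram_rowf: "diagram p = {(i,j). j < rowf p i}"
  unfolding diagram_def rowf_def by (auto split: if_splits)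

lemma diagram_Sigma: "diagram p = Sigma {..<length p} (\<lambda>i. {..<p ! i})"
  unfolding diagram_def by auto

lemma finite_diagram: "finite (diagram p)"
  unfolding diagram_Sigma by auto

lemma card_diagram: "card (diagram p) = psize p"
  unfolding diagram_Sigma psize_def
  by (simp add: card_SigmaI sum_list_sum_nth atLeast0LessThan)

lemma psize_rs: "is_partition p \<Longrightarrow> psize p = rs (rowf p)"
  using psize_fromrow[of "rowf p"] fromrow_rowf by simp

lemma one_elem: fixes h :: "'a \<Rightarrow> nat"
  assumes "finite A" "sum h A = 1" shows "\<exists>i\<in>A. h i = 1 \<and> (\<forall>x\<in>A. x \<noteq> i \<longrightarrow> h x = 0)"
proof -
  obtain i where i: "i \<in> A" "h i \<noteq> 0" using assms(2) sum.neutral by (metis zero_neq_one)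
  have "sum h A = h i + sum h (A - {i})" by (rule sum.remove[OF assms(1) i(1)])
  hence "h i = 1" "sum h (A - {i}) = 0" using assms(2) i(2) by auto
  hence "\<forall>x\<in>A. x \<noteq> i \<longrightarrow> h x = 0" using assms(1) by auto
  with i \<open>h i = 1\<close> show ?thesis by blast
qed

lemma up_AI: assumes "prow (up r i)" shows "i \<in> AI r"
proof (cases "i = 0")
  case False
  have "up r i (Suc (i - 1)) \<le> up r i (i - 1)" using assms unfolding prow_def by blast
  thus ?thesis using False unfolding up_def AI_def by (auto split: if_splits)
qed (auto simp: AI_def)

lemma cov_iff: "covers mu lam \<longleftrightarrow> is_partition mu \<and> is_partition lam \<and> (\<exists>i. rowf lam = up (rowf mu) i)"
proof
  assume c: "covers mu lam"
  hence pm: "is_partition mu" and pl: "is_partition lam" and sub: "diagram mu \<subseteq> diagram lam"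
    and cd: "card (diagram lam - diagram mu) = 1" unfolding covers_def by auto
  define a where "a = rowf mu"
  define b where "b = rowf lam"
  have pa: "prow a" and pb: "prow b" using part_rowf pm pl a_def b_def by auto
  have le: "a x \<le> b x" for x
  proof (rule ccontr)
    assume "\<not> a x \<le> b x"
    hence "(x, b x) \<in> diagram mu" "(x, b x) \<notin> diagram lam" unfolding diagram_rowf a_def b_def by auto
    thus False using sub by blast
  qed
  have "card (diagram lam) - card (diagram mu) = 1" using cd card_Diff_subset[OF finite_diagram sub] by simp
  hence sz: "rs b = rs a + 1" unfolding card_diagram psize_rs[OF pm] psize_rs[OF pl] a_def b_def by simp
  define M where "M = lenr a + lenr b"
  have "rs a = (\<Sum>x<M. a x)" "rs b = (\<Sum>x<M. b x)" using rs_ext pa pb M_def by auto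
  hence "(\<Sum>x<M. b x - a x) = 1" using sz by (simp add: sum_subtractf_nat le)
  then obtain i where i: "i < M" "b i - a i = 1" "\<forall>x<M. x \<noteq> i \<longrightarrow> b x - a x = 0"
    using one_elem[of "{..<M}" "\<lambda>x. b x - a x"] by auto
  have "b = up a i"
  proof
    fix x
    show "b x = up a i x"
    proof (cases "x < M")
      case True thus ?thesis using i le[of x] unfolding up_def by (cases "x = i") auto
    next
      case False
      hence "a x = 0" "b x = 0" using prow_zero_iff[OF pa] prow_zero_iff[OF pb] M_def by auto
      thus ?thesis using False i(1) unfolding up_def by auto
    qed
  qed
  thus "is_partition mu \<and> is_partition lam \<and> (\<exists>i. rowf lam = up (rowf mu) i)"
    using pm pl a_def b_def by auto
next
  assume "is_partition mu \<and> is_partition lam \<and> (\<exists>i. rowf lam = up (rowf mu) i)"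
  then obtain i where pm: "is_partition mu" and pl: "is_partition lam" and e: "rowf lam = up (rowf mu) i"
    by blast
  have ai: "i \<in> AI (rowf mu)" using up_AI part_rowf[OF pl] e by metis
  have sz: "psize lam = Suc (psize mu)"
    using rs_up[OF part_rowf[OF pm] ai] e psize_rs pm pl by simp
  have sub: "diagram mu \<subseteq> diagram lam" unfolding diagram_rowf e up_def by auto
  have "card (diagram lam - diagram mu) = 1"
    using card_Diff_subset[OF finite_diagram sub] sz unfolding card_diagram by simp
  thus "covers mu lam" unfolding covers_def using pm pl sub by blast
qed

lemma cov_psize: "covers mu lam \<Longrightarrow> psize lam = Suc (psize mu)"
  unfolding covers_def using card_Diff_subset[OF finite_diagram] card_diagram
  by (metis One_nat_def Suc_diff_le add_diff_inverse_nat card_mono finite_diagram le_add_diff_inverse2 plus_1_eq_Suc zero_less_Suc diff_is_0_eq' nat_le_linear less_numeral_extra(3) zero_less_diff)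

definition Up :: "nat list \<Rightarrow> nat list set" where "Up p = {nu. covers p nu}"
definition Dn :: "nat list \<Rightarrow> nat list set" where "Dn p = {mu. covers mu p}"

lemma Up_eq: assumes "is_partition p"
  shows "Up p = (\<lambda>i. fromrow (up (rowf p) i)) ` AI (rowf p)"
proof
  show "Up p \<subseteq> (\<lambda>i. fromrow (up (rowf p) i)) ` AI (rowf p)"
  proof
    fix nu assume "nu \<in> Up p"
    then obtain i where pn: "is_partition nu" and e: "rowf nu = up (rowf p) i"
      unfolding Up_def cov_iff by blast
    have "i \<in> AI (rowf p)" using up_AI part_rowf[OF pn] e by metis
    moreover have "nu = fromrow (up (rowf p) i)" using fromrow_rowf[OF pn] e by simp
    ultimately show "nu \<in> (\<lambda>i. fromrow (up (rowf p) i)) ` AI (rowf p)" by blast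
  qed
next
  show "(\<lambda>i. fromrow (up (rowf p) i)) ` AI (rowf p) \<subseteq> Up p"
  proof
    fix nu assume "nu \<in> (\<lambda>i. fromrow (up (rowf p) i)) ` AI (rowf p)"
    then obtain i where i: "i \<in> AI (rowf p)" "nu = fromrow (up (rowf p) i)" by blast
    have pr: "prow (up (rowf p) i)" using prow_up[OF part_rowf[OF assms] i(1)] .
    show "nu \<in> Up p" unfolding Up_def cov_iff using assms part_fromrow[OF pr] rowf_fromrow[OF pr] i(2)
      by blast
  qed
qed

lemma up_dn: "0 < r j \<Longrightarrow> up (dn r j) j = r"
  unfolding up_def dn_def by auto

lemma dn_up: "dn (up r i) i = r"
  unfolding up_def dn_def by auto

lemma Dn_eq: assumes "is_partition p"
  shows "Dn p = (\<lambda>j. fromrow (dn (rowf p) j)) ` RI (rowf p)"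
proof
  show "Dn p \<subseteq> (\<lambda>j. fromrow (dn (rowf p) j)) ` RI (rowf p)"
  proof
    fix mu assume "mu \<in> Dn p"
    then obtain j where pm: "is_partition mu" and e: "rowf p = up (rowf mu) j"
      unfolding Dn_def cov_iff by blast
    have "rowf mu (Suc j) \<le> rowf mu j" using part_rowf[OF pm] unfolding prow_def by blast
    hence "j \<in> RI (rowf p)" unfolding e RI_def up_def by auto
    moreover have "mu = fromrow (dn (rowf p) j)" using fromrow_rowf[OF pm] e dn_up by simp
    ultimately show "mu \<in> (\<lambda>j. fromrow (dn (rowf p) j)) ` RI (rowf p)" by blast
  qed
next
  show "(\<lambda>j. fromrow (dn (rowf p) j)) ` RI (rowf p) \<subseteq> Dn p"
  proof
    fix mu assume "mu \<in> (\<lambda>j. fromrow (dn (rowf p) j)) ` RI (rowf p)"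
    then obtain j where j: "j \<in> RI (rowf p)" "mu = fromrow (dn (rowf p) j)" by blast
    have pr: "prow (dn (rowf p) j)" using prow_dn[OF part_rowf[OF assms] j(1)] .
    have "0 < rowf p j" using j(1) unfolding RI_def by auto
    hence "rowf p = up (rowf mu) j" using rowf_fromrow[OF pr] j(2) up_dn by simp
    thus "mu \<in> Dn p" unfolding Dn_def cov_iff using assms part_fromrow[OF pr] j(2) by blast
  qed
qed

lemma inj_up: assumes "prow r" shows "inj_on (\<lambda>i. fromrow (up r i)) (AI r)"
proof
  fix i i' assume "i \<in> AI r" "i' \<in> AI r" "fromrow (up r i) = fromrow (up r i')"
  hence "up r i = up r i'" using rowf_fromrow prow_up assms by metis
  hence "up r i i = up r i' i" by simp
  thus "i = i'" unfolding up_def by (cases "i = i'") auto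
qed

lemma inj_dn: assumes "prow r" shows "inj_on (\<lambda>j. fromrow (dn r j)) (RI r)"
proof
  fix i i' assume "i \<in> RI r" "i' \<in> RI r" "fromrow (dn r i) = fromrow (dn r i')"
  hence "dn r i = dn r i'" using rowf_fromrow prow_dn assms by metis
  hence "dn r i i = dn r i' i" by simp
  moreover have "0 < r i" using \<open>i \<in> RI r\<close> unfolding RI_def by auto
  ultimately show "i = i'" unfolding dn_def by (cases "i = i'") auto
qed

lemma OT0: "OT lam 0 = (if lam = [] then {[[]]} else {})"
proof -
  have "T \<in> OT lam 0 \<longleftrightarrow> lam = [] \<and> T = [[]]" for T
  proof
    assume "T \<in> OT lam 0"
    hence "length T = 1" "T ! 0 = []" "T ! 0 = lam" unfolding OT_def by auto
    thus "lam = [] \<and> T = [[]]" by (cases T) auto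
  qed (auto simp: OT_def)
  thus ?thesis by auto
qed

lemma OTSuc: "OT lam (Suc L) = (\<lambda>T. T @ [lam]) ` (\<Union>mu\<in>Dn lam \<union> Up lam. OT mu L)"
proof
  show "OT lam (Suc L) \<subseteq> (\<lambda>T. T @ [lam]) ` (\<Union>mu\<in>Dn lam \<union> Up lam. OT mu L)"
  proof
    fix T' assume T': "T' \<in> OT lam (Suc L)"
    hence len: "length T' = Suc (Suc L)" and t0: "T' ! 0 = []" and tl: "T' ! Suc L = lam"
      and c: "\<And>i. 1 \<le> i \<Longrightarrow> i \<le> Suc L \<Longrightarrow> covers (T' ! (i - 1)) (T' ! i) \<or> covers (T' ! i) (T' ! (i - 1))"
      unfolding OT_def by auto
    define T where "T = butlast T'"
    have e: "T' = T @ [lam]" unfolding T_def using len tl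
      by (metis append_butlast_last_id diff_Suc_1 last_conv_nth list.size(3) nat.distinct(1))
    have lT: "length T = Suc L" using len T_def by simp
    have nth: "\<And>i. i \<le> L \<Longrightarrow> T' ! i = T ! i" unfolding e using lT by (simp add: nth_append)
    have "\<forall>i. 1 \<le> i \<and> i \<le> L \<longrightarrow> covers (T ! (i - 1)) (T ! i) \<or> covers (T ! i) (T ! (i - 1))"
    proof (intro allI impI)
      fix i assume "1 \<le> i \<and> i \<le> L"
      thus "covers (T ! (i - 1)) (T ! i) \<or> covers (T ! i) (T ! (i - 1))"
        using c[of i] nth[of i] nth[of "i - 1"] by auto
    qed
    hence "T \<in> OT (T' ! L) L" unfolding OT_def using lT t0 nth[of 0] nth[of L] by auto
    moreover have "T' ! L \<in> Dn lam \<union> Up lam" using c[of "Suc L"] tl unfolding Dn_def Up_def by auto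
    ultimately show "T' \<in> (\<lambda>T. T @ [lam]) ` (\<Union>mu\<in>Dn lam \<union> Up lam. OT mu L)" using e by blast
  qed
next
  show "(\<lambda>T. T @ [lam]) ` (\<Union>mu\<in>Dn lam \<union> Up lam. OT mu L) \<subseteq> OT lam (Suc L)"
  proof
    fix T' assume "T' \<in> (\<lambda>T. T @ [lam]) ` (\<Union>mu\<in>Dn lam \<union> Up lam. OT mu L)"
    then obtain T mu where e: "T' = T @ [lam]" and mu: "mu \<in> Dn lam \<union> Up lam" and T: "T \<in> OT mu L"
      by blast
    have lT: "length T = Suc L" and t0: "T ! 0 = []" and tl: "T ! L = mu"
      and c: "\<And>i. 1 \<le> i \<Longrightarrow> i \<le> L \<Longrightarrow> covers (T ! (i - 1)) (T ! i) \<or> covers (T ! i) (T ! (i - 1))"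
      using T unfolding OT_def by auto
    have nth: "\<And>i. i \<le> L \<Longrightarrow> T' ! i = T ! i" unfolding e using lT by (simp add: nth_append)
    have last: "T' ! Suc L = lam" unfolding e using lT by (simp add: nth_append)
    have "covers (T' ! (i - 1)) (T' ! i) \<or> covers (T' ! i) (T' ! (i - 1))" if "1 \<le> i" "i \<le> Suc L" for i
    proof (cases "i = Suc L")
      case True
      thus ?thesis using mu last nth[of L] tl unfolding Dn_def Up_def by auto
    next
      case False
      thus ?thesis using c[of i] that nth[of i] nth[of "i - 1"] by auto
    qed
    thus "T' \<in> OT lam (Suc L)" unfolding OT_def using e lT t0 nth[of 0] last by auto
  qed
qed

lemma finite_Dn: "finite (Dn p)"
proof (cases "is_partition p")
  case True thus ?thesis using Dn_eq finite_RI part_rowf by simp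
next
  case False thus ?thesis unfolding Dn_def covers_def by auto
qed

lemma finite_Up: "finite (Up p)"
proof (cases "is_partition p")
  case True thus ?thesis using Up_eq finite_AI part_rowf by simp
next
  case False thus ?thesis unfolding Up_def covers_def by auto
qed

lemma finite_OT: "finite (OT lam L)"
proof (induction L arbitrary: lam)
  case 0 thus ?case by (simp add: OT0)
next
  case (Suc L) thus ?case unfolding OTSuc using finite_Dn finite_Up by auto
qed

lemma DnUp_disj: "Dn p \<inter> Up p = {}"
proof -
  { fix x assume "covers x p" "covers p x"
    hence False using cov_psize[of x p] cov_psize[of p x] by simp }
  thus ?thesis unfolding Dn_def Up_def by blast
qed

lemma OT_disj: "mu \<noteq> mu' \<Longrightarrow> OT mu L \<inter> OT mu' L = {}"
  unfolding OT_def by auto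

lemma wt_snoc: assumes "T \<noteq> []" shows "wt (T @ [x]) = wt T + psize x"
proof -
  obtain m where m: "length T = Suc m" using assms by (cases T) auto
  have "wt (T @ [x]) = (\<Sum>i\<le>Suc m. psize ((T @ [x]) ! i))" unfolding wt_def using m by simp
  also have "\<dots> = (\<Sum>i\<le>m. psize ((T @ [x]) ! i)) + psize x" using m by (simp add: nth_append)
  also have "(\<Sum>i\<le>m. psize ((T @ [x]) ! i)) = (\<Sum>i\<le>m. psize (T ! i))"
    by (rule sum.cong) (auto simp: m nth_append)
  finally show ?thesis unfolding wt_def using m by simp
qed

definition Nw :: "nat list \<Rightarrow> nat \<Rightarrow> nat" where "Nw lam L = card (OT lam L)"
definition Sw :: "nat list \<Rightarrow> nat \<Rightarrow> nat" where "Sw lam L = (\<Sum>T\<in>OT lam L. wt T)"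

lemma Nw_Suc: "Nw lam (Suc L) = (\<Sum>mu\<in>Dn lam. Nw mu L) + (\<Sum>mu\<in>Up lam. Nw mu L)"
proof -
  have inj: "inj_on (\<lambda>T. T @ [lam]) X" for X by (rule inj_onI) simp
  have "Nw lam (Suc L) = card (\<Union>mu\<in>Dn lam \<union> Up lam. OT mu L)"
    unfolding Nw_def OTSuc by (rule card_image[OF inj])
  also have "\<dots> = (\<Sum>mu\<in>Dn lam \<union> Up lam. Nw mu L)" unfolding Nw_def
    by (rule card_UN_disjoint) (auto simp: finite_Dn finite_Up finite_OT OT_disj)
  also have "\<dots> = (\<Sum>mu\<in>Dn lam. Nw mu L) + (\<Sum>mu\<in>Up lam. Nw mu L)"
    by (rule sum.union_disjoint) (auto simp: finite_Dn finite_Up DnUp_disj[unfolded disjoint_iff])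
  finally show ?thesis .
qed

lemma Sw_Suc: "Sw lam (Suc L) = (\<Sum>mu\<in>Dn lam. Sw mu L + psize lam * Nw mu L)
   + (\<Sum>mu\<in>Up lam. Sw mu L + psize lam * Nw mu L)"
proof -
  have inj: "inj_on (\<lambda>T. T @ [lam]) X" for X by (rule inj_onI) simp
  have ne: "T \<noteq> []" if "T \<in> OT mu L" for T mu using that unfolding OT_def by auto
  have "Sw lam (Suc L) = (\<Sum>T\<in>(\<Union>mu\<in>Dn lam \<union> Up lam. OT mu L). wt (T @ [lam]))"
    unfolding Sw_def OTSuc by (rule sum.reindex[OF inj, unfolded comp_def])
  also have "\<dots> = (\<Sum>mu\<in>Dn lam \<union> Up lam. \<Sum>T\<in>OT mu L. wt (T @ [lam]))"
    by (rule sum.UNION_disjoint) (auto simp: finite_Dn finite_Up finite_OT OT_disj)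
  also have "\<dots> = (\<Sum>mu\<in>Dn lam \<union> Up lam. Sw mu L + psize lam * Nw mu L)"
  proof (rule sum.cong)
    fix mu
    have "(\<Sum>T\<in>OT mu L. wt (T @ [lam])) = (\<Sum>T\<in>OT mu L. wt T + psize lam)"
      by (rule sum.cong) (auto simp: wt_snoc ne)
    thus "(\<Sum>T\<in>OT mu L. wt (T @ [lam])) = Sw mu L + psize lam * Nw mu L"
      unfolding Sw_def Nw_def by (simp add: sum.distrib)
  qed simp
  also have "\<dots> = (\<Sum>mu\<in>Dn lam. Sw mu L + psize lam * Nw mu L) + (\<Sum>mu\<in>Up lam. Sw mu L + psize lam * Nw mu L)"
    by (rule sum.union_disjoint) (auto simp: finite_Dn finite_Up DnUp_disj[unfolded disjoint_iff])
  finally show ?thesis .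
qed

definition Nr :: "(nat \<Rightarrow> nat) \<Rightarrow> nat \<Rightarrow> nat" where "Nr r L = Nw (fromrow r) L"
definition Sr :: "(nat \<Rightarrow> nat) \<Rightarrow> nat \<Rightarrow> nat" where "Sr r L = Sw (fromrow r) L"

lemma Dn_fromrow: "prow r \<Longrightarrow> Dn (fromrow r) = (\<lambda>j. fromrow (dn r j)) ` RI r"
  using Dn_eq[OF part_fromrow] rowf_fromrow by metis

lemma Up_fromrow: "prow r \<Longrightarrow> Up (fromrow r) = (\<lambda>i. fromrow (up r i)) ` AI r"
  using Up_eq[OF part_fromrow] rowf_fromrow by metis

lemma Nr_Suc: assumes "prow r"
  shows "Nr r (Suc L) = (\<Sum>j\<in>RI r. Nr (dn r j) L) + (\<Sum>i\<in>AI r. Nr (up r i) L)"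
  unfolding Nr_def Nw_Suc[of "fromrow r"] Dn_fromrow[OF assms] Up_fromrow[OF assms]
  by (simp add: sum.reindex[OF inj_dn[OF assms]] sum.reindex[OF inj_up[OF assms]])

lemma Sr_Suc: assumes "prow r"
  shows "Sr r (Suc L) = (\<Sum>j\<in>RI r. Sr (dn r j) L + rs r * Nr (dn r j) L)
     + (\<Sum>i\<in>AI r. Sr (up r i) L + rs r * Nr (up r i) L)"
  unfolding Sr_def Nr_def Sw_Suc[of "fromrow r"] Dn_fromrow[OF assms] Up_fromrow[OF assms]
  by (simp add: sum.reindex[OF inj_dn[OF assms]] sum.reindex[OF inj_up[OF assms]] psize_fromrow)

lemma Nr_zero: "prow r \<Longrightarrow> L < rs r \<Longrightarrow> Nr r L = 0"
proof (induction L arbitrary: r)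
  case 0
  hence "fromrow r \<noteq> []" using psize_fromrow[of r] unfolding psize_def by auto
  thus ?case unfolding Nr_def Nw_def OT0 by simp
next
  case (Suc L)
  have "\<forall>j\<in>RI r. Nr (dn r j) L = 0"
    using Suc.IH prow_dn[OF Suc.prems(1)] rs_dn[OF Suc.prems(1)] Suc.prems(2) by fastforce
  moreover have "\<forall>i\<in>AI r. Nr (up r i) L = 0"
    using Suc.IH prow_up[OF Suc.prems(1)] rs_up[OF Suc.prems(1)] Suc.prems(2) by fastforce
  ultimately show ?case unfolding Nr_Suc[OF Suc.prems(1)] by simp
qed

definition F :: "(nat \<Rightarrow> nat) \<Rightarrow> nat" where "F r = Nr r (rs r)"

lemma F_rec: assumes "prow r" "0 < rs r" shows "F r = (\<Sum>j\<in>RI r. F (dn r j))"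
proof -
  obtain m where m: "rs r = Suc m" using assms(2) by (cases "rs r") auto
  have "\<forall>i\<in>AI r. Nr (up r i) m = 0"
    using Nr_zero prow_up[OF assms(1)] rs_up[OF assms(1)] m by auto
  moreover have "\<forall>j\<in>RI r. Nr (dn r j) m = F (dn r j)"
    using rs_dn[OF assms(1)] m unfolding F_def by auto
  ultimately show ?thesis unfolding F_def m Nr_Suc[OF assms(1)] by simp
qed

lemma rs_zero: assumes "prow r" "rs r = 0" shows "fromrow r = []"
proof -
  have "\<forall>x\<in>set (fromrow r). 0 < x" using part_fromrow[OF assms(1)] unfolding is_partition_def by blast
  moreover have "sum_list (fromrow r) = 0" using psize_fromrow assms(2) unfolding psize_def by simp
  ultimately show ?thesis by (cases "fromrow r") auto
qed

lemma F_zero: assumes "prow r" "rs r = 0" shows "F r = 1"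
  unfolding F_def Nr_def Nw_def assms(2) rs_zero[OF assms] OT0 by simp

lemma RI_nonempty: assumes "prow r" "0 < rs r" shows "lenr r - 1 \<in> RI r"
proof -
  have "0 < lenr r" using assms unfolding rs_def by (metis lessThan_0 sum.empty neq0_conv less_irrefl)
  hence "0 < r (lenr r - 1)" "r (Suc (lenr r - 1)) = 0" using prow_pos_iff[OF assms(1)] prow_zero_iff[OF assms(1)] by auto
  thus ?thesis unfolding RI_def by auto
qed

lemma F_pos: "prow r \<Longrightarrow> 0 < F r"
proof (induction "rs r" arbitrary: r rule: less_induct)
  case less
  show ?case
  proof (cases "rs r = 0")
    case True thus ?thesis using F_zero less.prems by simp
  next
    case False
    hence j: "lenr r - 1 \<in> RI r" using RI_nonempty less.prems by auto
    have "0 < F (dn r (lenr r - 1))"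
      using less.hyps[OF _ prow_dn[OF less.prems j]] rs_dn[OF less.prems j] by simp
    also have "\<dots> \<le> (\<Sum>j\<in>RI r. F (dn r j))"
      by (rule member_le_sum[OF j]) (auto simp: finite_RI less.prems)
    finally show ?thesis using F_rec less.prems False by simp
  qed
qed

lemma AI_RI: "AI r = insert 0 (Suc ` RI r)"
proof
  show "AI r \<subseteq> insert 0 (Suc ` RI r)"
  proof
    fix i assume "i \<in> AI r"
    thus "i \<in> insert 0 (Suc ` RI r)" unfolding AI_def RI_def
      by (cases i) auto
  qed
qed (auto simp: AI_def RI_def)

lemma card_AI: "prow r \<Longrightarrow> card (AI r) = Suc (card (RI r))"
  unfolding AI_RI by (simp add: card_image finite_RI)

lemma swap_pred: "(i \<in> AI r \<and> j \<in> RI (up r i) - {i}) \<longleftrightarrow> (j \<in> RI r \<and> i \<in> AI (dn r j) - {j})"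
  unfolding AI_def RI_def up_def dn_def by (cases i) (auto split: if_splits)

lemma swap_fun: "i \<noteq> j \<Longrightarrow> dn (up r i) j = up (dn r j) i"
  unfolding AI_def RI_def up_def dn_def by (auto simp: fun_upd_twist)

lemma sum_filter2: fixes g :: "'a \<Rightarrow> 'b \<Rightarrow> nat"
  assumes "finite B" "finite B'" "A \<subseteq> B" "\<And>i. i \<in> A \<Longrightarrow> C i \<subseteq> B'"
  shows "(\<Sum>i\<in>A. \<Sum>j\<in>C i. g i j) = (\<Sum>i\<in>B. \<Sum>j\<in>B'. if i \<in> A \<and> j \<in> C i then g i j else 0)"
proof -
  have "(\<Sum>i\<in>A. \<Sum>j\<in>C i. g i j) = (\<Sum>i\<in>A. \<Sum>j\<in>B'. if i \<in> A \<and> j \<in> C i then g i j else 0)"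
  proof (rule sum.cong)
    fix i assume i: "i \<in> A"
    have "(\<Sum>j\<in>B'. if i \<in> A \<and> j \<in> C i then g i j else 0) = (\<Sum>j\<in>B'. if j \<in> C i then g i j else 0)"
      using i by simp
    also have "\<dots> = sum (g i) (B' \<inter> C i)" using sum.inter_restrict[OF assms(2)] by metis
    also have "B' \<inter> C i = C i" using assms(4)[OF i] by blast
    finally show "sum (g i) (C i) = (\<Sum>j\<in>B'. if i \<in> A \<and> j \<in> C i then g i j else 0)" by simp
  qed simp
  also have "\<dots> = (\<Sum>i\<in>B. \<Sum>j\<in>B'. if i \<in> A \<and> j \<in> C i then g i j else 0)"
    by (rule sum.mono_neutral_left) (use assms in auto)
  finally show ?thesis .
qed

lemma RI_up_bound: assumes "prow r" "i \<in> AI r" shows "RI (up r i) \<subseteq> {..lenr r}"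
proof -
  have "i \<le> lenr r" using finite_AI[OF assms(1)] assms(2) by auto
  hence "up r i (Suc (lenr r)) = 0" unfolding up_def using prow_zero_iff[OF assms(1)] by auto
  hence "lenr (up r i) \<le> Suc (lenr r)" by (rule lenr_le)
  thus ?thesis using finite_RI(1)[OF prow_up[OF assms]] by auto
qed

lemma AI_dn_bound: assumes "prow r" "j \<in> RI r" shows "AI (dn r j) \<subseteq> {..lenr r}"
proof -
  have "j < lenr r" using finite_RI[OF assms(1)] assms(2) by auto
  hence "dn r j (lenr r) = 0" unfolding dn_def using prow_zero_iff[OF assms(1)] by auto
  hence "lenr (dn r j) \<le> lenr r" by (rule lenr_le)
  thus ?thesis using finite_AI(1)[OF prow_dn[OF assms]] by auto
qed

lemma key: "prow r \<Longrightarrow> (\<Sum>i\<in>AI r. F (up r i)) = Suc (rs r) * F r"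
proof (induction "rs r" arbitrary: r rule: less_induct)
  case less
  note pr = less.prems
  define k where "k = rs r"
  define X where "X = (\<Sum>i\<in>AI r. \<Sum>j\<in>RI (up r i) - {i}. F (dn (up r i) j))"
  define Y where "Y = (\<Sum>j\<in>RI r. \<Sum>i\<in>AI (dn r j) - {j}. F (up (dn r j) i))"
  have L1: "(\<Sum>i\<in>AI r. F (up r i)) = card (AI r) * F r + X"
  proof -
    have "F (up r i) = F r + (\<Sum>j\<in>RI (up r i) - {i}. F (dn (up r i) j))" if i: "i \<in> AI r" for i
    proof -
      have pu: "prow (up r i)" using prow_up[OF pr i] .
      have "r (Suc i) \<le> r i" using pr unfolding prow_def by blast
      hence "i \<in> RI (up r i)" unfolding RI_def up_def by simp
      have "F (up r i) = (\<Sum>j\<in>RI (up r i). F (dn (up r i) j))"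
        using F_rec[OF pu] rs_up[OF pr i] by simp
      also have "\<dots> = F (dn (up r i) i) + (\<Sum>j\<in>RI (up r i) - {i}. F (dn (up r i) j))"
        by (rule sum.remove[OF finite_RI(2)[OF pu] \<open>i \<in> RI (up r i)\<close>])
      finally show ?thesis by (simp add: dn_up)
    qed
    hence "(\<Sum>i\<in>AI r. F (up r i)) = (\<Sum>i\<in>AI r. F r + (\<Sum>j\<in>RI (up r i) - {i}. F (dn (up r i) j)))"
      by (rule sum.cong[OF refl])
    thus ?thesis unfolding X_def by (simp add: sum.distrib)
  qed
  have L2: "(\<Sum>j\<in>RI r. k * F (dn r j)) = card (RI r) * F r + Y"
  proof -
    have "k * F (dn r j) = F r + (\<Sum>i\<in>AI (dn r j) - {j}. F (up (dn r j) i))" if j: "j \<in> RI r" for j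
    proof -
      have pd: "prow (dn r j)" using prow_dn[OF pr j] .
      have rj: "0 < r j" using j unfolding RI_def by auto
      have ks: "Suc (rs (dn r j)) = k" using rs_dn[OF pr j] k_def by simp
      have "j \<in> AI (dn r j)"
      proof (cases "j = 0")
        case False
        have "r j \<le> r (j - 1)" using prow_mono[OF pr] by simp
        thus ?thesis using False rj unfolding AI_def dn_def by auto
      qed (simp add: AI_def)
      have "k * F (dn r j) = (\<Sum>i\<in>AI (dn r j). F (up (dn r j) i))"
        using less.hyps[OF _ pd] ks k_def by simp
      also have "\<dots> = F (up (dn r j) j) + (\<Sum>i\<in>AI (dn r j) - {j}. F (up (dn r j) i))"
        by (rule sum.remove[OF finite_AI(2)[OF pd] \<open>j \<in> AI (dn r j)\<close>])
      finally show ?thesis using up_dn[of r j, OF rj] by simp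
    qed
    hence "(\<Sum>j\<in>RI r. k * F (dn r j)) = (\<Sum>j\<in>RI r. F r + (\<Sum>i\<in>AI (dn r j) - {j}. F (up (dn r j) i)))"
      by (rule sum.cong[OF refl])
    thus ?thesis unfolding Y_def by (simp add: sum.distrib)
  qed
  have L3: "(\<Sum>j\<in>RI r. k * F (dn r j)) = k * F r"
  proof (cases "k = 0")
    case False
    thus ?thesis using F_rec[OF pr] k_def by (simp add: sum_distrib_left)
  qed simp
  have XY: "X = Y"
  proof -
    define B where "B = {..lenr r}"
    have "X = (\<Sum>i\<in>B. \<Sum>j\<in>B. if i \<in> AI r \<and> j \<in> RI (up r i) - {i} then F (dn (up r i) j) else 0)"
      unfolding X_def B_def
      by (rule sum_filter2) (use finite_AI[OF pr] RI_up_bound[OF pr] in auto)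
    also have "\<dots> = (\<Sum>j\<in>B. \<Sum>i\<in>B. if i \<in> AI r \<and> j \<in> RI (up r i) - {i} then F (dn (up r i) j) else 0)"
      by (rule sum.swap)
    also have "\<dots> = (\<Sum>j\<in>B. \<Sum>i\<in>B. if j \<in> RI r \<and> i \<in> AI (dn r j) - {j} then F (up (dn r j) i) else 0)"
    proof (intro sum.cong refl)
      fix j i
      have e: "(i \<in> AI r \<and> j \<in> RI (up r i) - {i}) = (j \<in> RI r \<and> i \<in> AI (dn r j) - {j})"
        by (rule swap_pred)
      show "(if i \<in> AI r \<and> j \<in> RI (up r i) - {i} then F (dn (up r i) j) else 0) =
            (if j \<in> RI r \<and> i \<in> AI (dn r j) - {j} then F (up (dn r j) i) else 0)"
      proof (cases "j \<in> RI r \<and> i \<in> AI (dn r j) - {j}")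
        case True
        hence "i \<noteq> j" by auto
        have h: "i \<in> AI r \<and> j \<in> RI (up r i) - {i}" using e True by blast
        show ?thesis unfolding if_P[OF h] if_P[OF True] swap_fun[OF \<open>i \<noteq> j\<close>] ..
      next
        case False
        hence h: "\<not> (i \<in> AI r \<and> j \<in> RI (up r i) - {i})" using e by blast
        show ?thesis by (rule trans[OF if_not_P[OF h] if_not_P[OF False, symmetric]])
      qed
    qed
    also have "\<dots> = Y"
      unfolding Y_def B_def
      by (rule sum_filter2[symmetric]) (use finite_RI[OF pr] AI_dn_bound[OF pr] in auto)
    finally show ?thesis .
  qed
  have "(\<Sum>i\<in>AI r. F (up r i)) = Suc (card (RI r)) * F r + Y" using L1 XY card_AI[OF pr] by simp
  also have "\<dots> = F r + k * F r" using L2 L3 by simp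
  finally show ?case unfolding k_def by simp
qed

fun aa :: "nat \<Rightarrow> nat \<Rightarrow> nat" where
  "aa 0 k = (if k = 0 then 1 else 0)"
| "aa (Suc L) k = (case k of 0 \<Rightarrow> 0 | Suc k' \<Rightarrow> aa L k') + Suc k * aa L (Suc k)"

fun bb :: "nat \<Rightarrow> nat \<Rightarrow> nat" where
  "bb 0 k = 0"
| "bb (Suc L) k = (case k of 0 \<Rightarrow> 0 | Suc k' \<Rightarrow> bb L k') + Suc k * bb L (Suc k) + k * aa (Suc L) k"

lemma sumdn: assumes "prow r" shows "(\<Sum>j\<in>RI r. F (dn r j)) = (if rs r = 0 then 0 else F r)"
proof (cases "rs r = 0")
  case True
  have "RI r = {}" using rs_dn[OF assms] True by fastforce
  thus ?thesis using True by simp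
qed (use F_rec[OF assms] in simp)

lemma main: "prow r \<Longrightarrow> Nr r L = aa L (rs r) * F r \<and> Sr r L = bb L (rs r) * F r"
proof (induction L arbitrary: r)
  case 0
  show ?case
  proof (cases "rs r = 0")
    case True
    thus ?thesis using rs_zero[OF 0 True] F_zero[OF 0 True]
      unfolding Nr_def Sr_def Nw_def Sw_def OT0 by (simp add: wt_def psize_def)
  next
    case False
    hence "fromrow r \<noteq> []" using psize_fromrow[of r] unfolding psize_def by auto
    thus ?thesis using False unfolding Nr_def Sr_def Nw_def Sw_def OT0 by simp
  qed
next
  case (Suc L)
  note pr = Suc.prems
  define k where "k = rs r"
  have IHd: "Nr (dn r j) L = aa L (k - 1) * F (dn r j) \<and> Sr (dn r j) L = bb L (k - 1) * F (dn r j)"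
    if "j \<in> RI r" for j
    using Suc.IH[OF prow_dn[OF pr that]] rs_dn[OF pr that] k_def by (metis diff_Suc_1)
  have IHu: "Nr (up r i) L = aa L (Suc k) * F (up r i) \<and> Sr (up r i) L = bb L (Suc k) * F (up r i)"
    if "i \<in> AI r" for i
    using Suc.IH[OF prow_up[OF pr that]] rs_up[OF pr that] k_def by metis
  have sd: "(\<Sum>j\<in>RI r. F (dn r j)) = (if k = 0 then 0 else F r)" using sumdn[OF pr] k_def by simp
  have su: "(\<Sum>i\<in>AI r. F (up r i)) = Suc k * F r" using key[OF pr] k_def by simp
  have N: "Nr r (Suc L) = aa L (k - 1) * (\<Sum>j\<in>RI r. F (dn r j)) + aa L (Suc k) * (\<Sum>i\<in>AI r. F (up r i))"
    unfolding Nr_Suc[OF pr] sum_distrib_left using IHd IHu by (simp cong: sum.cong)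
  have S: "Sr r (Suc L) = (bb L (k - 1) + k * aa L (k - 1)) * (\<Sum>j\<in>RI r. F (dn r j))
      + (bb L (Suc k) + k * aa L (Suc k)) * (\<Sum>i\<in>AI r. F (up r i))"
    unfolding Sr_Suc[OF pr] sum_distrib_left k_def[symmetric] using IHd IHu
    by (simp add: algebra_simps cong: sum.cong)
  show ?case
  proof (cases k)
    case 0
    thus ?thesis using N S sd su k_def by simp
  next
    case (Suc k')
    thus ?thesis using N S sd su k_def by (simp add: algebra_simps)
  qed
qed

definition Acl :: "nat \<Rightarrow> nat \<Rightarrow> real" where
  "Acl k n = fact (k + 2 * n) / (fact k * 2 ^ n * fact n)"

definition Gcl :: "nat \<Rightarrow> nat \<Rightarrow> real" where
  "Gcl k n = (4 * real n ^ 2 + 3 * real k ^ 2 + 8 * real k * real n + 2 * real n + 3 * real k) / 6"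

lemma A_pos: "0 < Acl k n"
  unfolding Acl_def by (simp add: fact_gt_zero)

lemma R1: "Acl k n * (real k + 1 + 2 * real n) = Acl (Suc k) n * (real k + 1)"
proof -
  define c where "c = real k + 1 + 2 * real n"
  define d where "d = real k + 1"
  define FF where "FF = (fact (k + 2 * n) :: real)"
  define a where "a = (fact k :: real)"
  define b where "b = (fact n :: real)"
  define p where "p = (2::real) ^ n"
  have f1: "fact (Suc k + 2 * n) = c * FF"
    using fact_Suc[of "k + 2 * n", where 'a = real] by (simp add: algebra_simps c_def FF_def)
  have f2: "fact (Suc k) = d * a" by (simp add: algebra_simps d_def a_def)
  have nz: "d \<noteq> 0" "a \<noteq> 0" "b \<noteq> 0" "p \<noteq> 0" unfolding d_def a_def b_def p_def by auto
  have e1: "Acl (Suc k) n = c * FF / (d * a * p * b)" unfolding Acl_def f1 f2 p_def b_def by simp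
  have e2: "Acl k n = FF / (a * p * b)" unfolding Acl_def FF_def a_def p_def b_def by simp
  have "Acl k n * c = Acl (Suc k) n * d" unfolding e1 e2 using nz by (simp add: field_simps)
  thus ?thesis unfolding c_def d_def .
qed

lemma R2: "Acl (Suc k) n * (real k + 1) * (real k + 2 + 2 * real n) = Acl k (Suc n) * (2 * real n + 2)"
proof -
  define c where "c = real k + 1 + 2 * real n"
  define e where "e = real k + 2 + 2 * real n"
  define d where "d = real k + 1"
  define m where "m = real n + 1"
  define FF where "FF = (fact (k + 2 * n) :: real)"
  define a where "a = (fact k :: real)"
  define b where "b = (fact n :: real)"
  define p where "p = (2::real) ^ n"
  have f1: "fact (Suc k + 2 * n) = c * FF"
    using fact_Suc[of "k + 2 * n", where 'a = real] by (simp add: algebra_simps c_def FF_def)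
  have f3: "fact (k + 2 * Suc n) = e * c * FF"
  proof -
    have "k + 2 * Suc n = Suc (Suc (k + 2 * n))" by simp
    thus ?thesis unfolding e_def c_def FF_def by (simp only: fact_Suc) (simp add: algebra_simps)
  qed
  have f2: "fact (Suc k) = d * a" by (simp add: algebra_simps d_def a_def)
  have f4: "fact (Suc n) = m * b" by (simp add: algebra_simps m_def b_def)
  have nz: "d \<noteq> 0" "a \<noteq> 0" "b \<noteq> 0" "p \<noteq> 0" "m \<noteq> 0" unfolding d_def a_def b_def p_def m_def by auto
  have e1: "Acl (Suc k) n = c * FF / (d * a * p * b)" unfolding Acl_def f1 f2 p_def b_def by simp
  have e2: "Acl k (Suc n) = e * c * FF / (a * (2 * p) * (m * b))" unfolding Acl_def f3 f4 p_def a_def by simp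
  have "Acl (Suc k) n * d * e = Acl k (Suc n) * (2 * m)" unfolding e1 e2 using nz by (simp add: field_simps)
  thus ?thesis unfolding d_def e_def m_def by (simp add: algebra_simps)
qed

lemma Gid: "Gcl (Suc k) (Suc n) * (real k + 1 + 2 * (real n + 1)) =
   (real k + 1) * Gcl k (Suc n) + 2 * (real n + 1) * Gcl (Suc (Suc k)) n + (real k + 1) * (real k + 1 + 2 * (real n + 1))"
  unfolding Gcl_def by (simp add: field_simps power2_eq_square)

lemma Gid0: "Gcl 1 n = Gcl 0 (Suc n)" unfolding Gcl_def by (simp add: field_simps power2_eq_square)
lemma Gid1: "Gcl (Suc k) 0 = Gcl k 0 + (real k + 1)" unfolding Gcl_def by (simp add: field_simps power2_eq_square)
lemma Aid0: "Acl 1 n = Acl 0 (Suc n)"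
proof -
  have "Acl 1 n * (0 + 1) * (0 + 2 + 2 * real n) = Acl 0 (Suc n) * (2 * real n + 2)" using R2[of 0 n] by simp
  hence "Acl 1 n * (2 * real n + 2) = Acl 0 (Suc n) * (2 * real n + 2)" by (simp add: algebra_simps)
  moreover have "2 * real n + 2 \<noteq> 0" by simp
  ultimately show ?thesis by simp
qed
lemma Aid1: "Acl k 0 = 1" unfolding Acl_def by (simp add: fact_gt_zero)

lemma ab_zero: "L < k \<Longrightarrow> aa L k = 0 \<and> bb L k = 0"
proof (induction L arbitrary: k)
  case 0 thus ?case by simp
next
  case (Suc L)
  then obtain k' where k: "k = Suc k'" "L < k'" by (cases k) auto
  have "aa (Suc L) k = 0" using Suc.IH[of k'] Suc.IH[of "Suc k"] k by simp
  moreover have "bb (Suc L) k = 0" using Suc.IH[of k'] Suc.IH[of "Suc k"] k \<open>aa (Suc L) k = 0\<close>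
    by (simp del: aa.simps)
  ultimately show ?case by simp
qed

lemma closed: "L = k + 2 * n \<Longrightarrow> real (aa L k) = Acl k n \<and> real (bb L k) = Acl k n * Gcl k n"
proof (induction L arbitrary: k n)
  case 0 thus ?case by (simp add: Aid1 Gcl_def)
next
  case (Suc L)
  show ?case
  proof (cases k)
    case 0
    then obtain n' where n: "n = Suc n'" using Suc.prems by (cases n) auto
    have "L = 1 + 2 * n'" using Suc.prems 0 n by simp
    note IH = Suc.IH[OF this]
    thus ?thesis using 0 n Aid0 Gid0 by simp
  next
    case (Suc k')
    note kS = Suc
    show ?thesis
    proof (cases n)
      case 0
      have hL: "L = k' + 2 * 0" using Suc.prems kS 0 by simp
      note IH = Suc.IH[OF hL]
      have "L < Suc k" using hL kS by simp
      note z = ab_zero[OF this]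
      have "real (aa (Suc L) k) = 1" using IH z kS Aid1 by simp
      moreover have "real (bb (Suc L) k) = Gcl k' 0 + real k" using IH z kS Aid1 \<open>real (aa (Suc L) k) = 1\<close>
        by (simp del: aa.simps)
      ultimately show ?thesis using Aid1 Gid1 kS 0 by simp
    next
      case (Suc n')
      note nS = Suc
      define x where "x = Acl k n"
      define y where "y = Acl k' n"
      define z where "z = Acl (Suc k) n'"
      define s where "s = real k' + 1 + 2 * (real n' + 1)"
      have h1: "L = k' + 2 * n" using Suc.prems kS nS by simp
      have h2: "L = Suc k + 2 * n'" using Suc.prems kS nS by simp
      have IH1: "real (aa L k') = y \<and> real (bb L k') = y * Gcl k' n"
        using Suc.IH[OF h1] y_def by simp
      have IH2: "real (aa L (Suc k)) = z \<and> real (bb L (Suc k)) = z * Gcl (Suc k) n'"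
        using Suc.IH[OF h2] z_def by simp
      have hA: "real (aa (Suc L) k) = y + (real k' + 2) * z" using IH1 IH2 kS by (simp add: algebra_simps)
      have hB: "real (bb (Suc L) k) = y * Gcl k' n + (real k' + 2) * (z * Gcl (Suc k) n') + (real k' + 1) * (y + (real k' + 2) * z)"
        using IH1 IH2 kS hA by (simp del: aa.simps add: algebra_simps)
      have r1: "y * s = x * (real k' + 1)" using R1[of k' n] unfolding x_def y_def s_def kS nS by simp
      have r2: "z * (real k' + 2) * s = x * (2 * real n' + 2)"
        using R2[of "Suc k'" n'] unfolding x_def z_def s_def kS nS by (simp add: algebra_simps)
      have spos: "s \<noteq> 0" unfolding s_def by simp
      have "(y + (real k' + 2) * z) * s = x * s"
      proof -
        have "(y + (real k' + 2) * z) * s = y * s + z * (real k' + 2) * s" by (simp add: algebra_simps)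
        also have "\<dots> = x * (real k' + 1) + x * (2 * real n' + 2)" by (simp only: r1 r2)
        also have "\<dots> = x * s" unfolding s_def by (simp add: algebra_simps)
        finally show ?thesis .
      qed
      hence ax: "y + (real k' + 2) * z = x" using spos by simp
      have "real (bb (Suc L) k) * s = x * (Gcl k n * s)"
      proof -
        have "real (bb (Suc L) k) * s = (y * s) * Gcl k' n + (z * (real k' + 2) * s) * Gcl (Suc k) n' + (real k' + 1) * x * s"
          unfolding hB ax[symmetric] by (simp add: algebra_simps)
        also have "\<dots> = (x * (real k' + 1)) * Gcl k' n + (x * (2 * real n' + 2)) * Gcl (Suc k) n' + (real k' + 1) * x * s"
          by (simp only: r1 r2)
        also have "\<dots> = x * ((real k' + 1) * Gcl k' (Suc n') + 2 * (real n' + 1) * Gcl (Suc (Suc k')) n' + (real k' + 1) * s)"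
          unfolding nS kS by (simp add: algebra_simps)
        also have "\<dots> = x * (Gcl k n * s)" unfolding kS nS s_def Gid ..
        finally show ?thesis .
      qed
      hence "real (bb (Suc L) k) = x * Gcl k n" using spos by simp
      thus ?thesis using hA ax x_def by simp
    qed
  qed
qed


theorem theorem2:
  fixes lam :: "nat list" and k n :: nat
  assumes "is_partition lam" and "psize lam = k"
  shows "(1 / real (card (OT lam (k + 2 * n)))) * (\<Sum>T\<in>OT lam (k + 2 * n). real (wt T))
         = (4 * real n ^ 2 + 3 * real k ^ 2 + 8 * real k * real n + 2 * real n + 3 * real k) / 6"
proof -
  define r where "r = rowf lam"
  define L where "L = k + 2 * n"
  have pr: "prow r" using part_rowf[OF assms(1)] r_def by simp
  have fl: "fromrow r = lam" using fromrow_rowf[OF assms(1)] r_def by simp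
  have rk: "rs r = k" using psize_rs[OF assms(1)] assms(2) r_def by simp
  have m: "Nr r L = aa L k * F r \<and> Sr r L = bb L k * F r" using main[OF pr] rk by simp
  have c: "card (OT lam L) = aa L k * F r" using m fl unfolding Nr_def Nw_def by simp
  have "(\<Sum>T\<in>OT lam L. real (wt T)) = real (Sw lam L)" unfolding Sw_def by simp
  also have "\<dots> = real (bb L k * F r)" using m fl unfolding Sr_def by simp
  finally have sm: "(\<Sum>T\<in>OT lam L. real (wt T)) = real (bb L k) * real (F r)" by simp
  have cl: "real (aa L k) = Acl k n \<and> real (bb L k) = Acl k n * Gcl k n" using closed L_def by simp
  have pos: "0 < Acl k n" "0 < real (F r)" using A_pos F_pos[OF pr] by auto
  have "(1 / real (card (OT lam L))) * (\<Sum>T\<in>OT lam L. real (wt T)) = Gcl k n"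
    unfolding c sm using cl pos by (simp add: field_simps)
  thus ?thesis unfolding L_def Gcl_def .
qed

end
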